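(* For every $\alpha\in(0,1)$, every randomized online algorithm for non-clairvoyant dynamic bin packing that makes at most $\alpha n$ migrations in expectation on every instance with $n$ items has competitive ratio at least $\frac14\left\lfloor \frac{1}{4\alpha}\right\rfloor$ with respect to the total active time objective.
   Context: Dynamic bin packing: bins have capacity $1$. Items $i=1,\dots,n$ arrive online at times $a_i\ge0$ with size $s_i\in[0,1]$ and duration $d_i>0$; item $i$ is present during $[a_i,a_i+d_i)$. Non-clairvoyant: at arrival only the size is revealed, not the duration. On arrival the item must be placed into an open bin with enough remaining capacity, or into a newly opened bin. A migration moves an already placed item to another bin; migrations are counted by number of moves. A bin is open while it contains an item. The cost (total active time) of an algorithm on instance $I$ is $\int_0^\infty (\text{number of open bins at time } t)\,dt$. $\mathrm{OPT}(I)=\int_0^\infty \mathrm{OPT}_t\,dt$, where $\mathrm{OPT}_t$ is the minimum number of unit bins needed to pack the items present at time $t$ (the optimal offline policy that knows the instance and may repack arbitrarily at any time). A randomized algorithm has competitive ratio at least $\gamma$ if for every $\beta<\gamma$ there is an instance $I$ with $\mathbb{E}[\mathrm{cost}(I)] > \beta\,\mathrm{OPT}(I)$. *)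

theory Defs
  imports "HOL-Probability.Probability"
begin

type_synonym item = "real \<times> real \<times> real"
type_synonym bp_instance = "item list"
(* A deterministic packing policy: instance, time t, item index \<mapsto> bin label at time t.
   Its behaviour at time t is required (see online_packing_alg) to depend only on the
   information observable up to time t. *)
type_synonym bp_alg = "bp_instance \<Rightarrow> real \<Rightarrow> nat \<Rightarrow> nat"

definition arr :: "item \<Rightarrow> real" where "arr x = fst x"
definition isize :: "item \<Rightarrow> real" where "isize x = fst (snd x)"
definition dur :: "item \<Rightarrow> real" where "dur x = snd (snd x)"

definition valid_instance :: "bp_instance \<Rightarrow> bool" where
  "valid_instance I \<longleftrightarrow>
     (\<forall>x\<in>set I. 0 \<le> arr x \<and> 0 \<le> isize x \<and> isize x \<le> 1 \<and> 0 < dur x) \<and> sorted (map arr I)"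

definition present :: "bp_instance \<Rightarrow> nat \<Rightarrow> real \<Rightarrow> bool" where
  "present I i t \<longleftrightarrow> i < length I \<and> arr (I!i) \<le> t \<and> t < arr (I!i) + dur (I!i)"

(* Durations of present items are hidden. *)
definition view :: "bp_instance \<Rightarrow> real \<Rightarrow> nat \<Rightarrow> (real \<times> real \<times> real option) option" where
  "view I t i = (if i < length I \<and> arr (I!i) \<le> t
      then Some (arr (I!i), isize (I!i),
                 if arr (I!i) + dur (I!i) \<le> t then Some (arr (I!i) + dur (I!i)) else None)
      else None)"

(* Deterministic non-clairvoyant online algorithm (with migrations allowed at any time):
   online/non-clairvoyant, capacity-feasible, and each item's bin is right-locally constant
   while it is present (a decision persists for positive time). *)
definition online_packing_alg :: "bp_alg \<Rightarrow> bool" where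
  "online_packing_alg A \<longleftrightarrow>
     (\<forall>I I' t i. valid_instance I \<longrightarrow> valid_instance I' \<longrightarrow> view I t = view I' t \<longrightarrow>
         present I i t \<longrightarrow> A I t i = A I' t i) \<and>
     (\<forall>I t b. valid_instance I \<longrightarrow>
         (\<Sum>i\<in>{i. present I i t \<and> A I t i = b}. isize (I!i)) \<le> 1) \<and>
     (\<forall>I i t. valid_instance I \<longrightarrow> present I i t \<longrightarrow>
         (\<exists>\<epsilon>>0. \<forall>u. t \<le> u \<longrightarrow> u < t + \<epsilon> \<longrightarrow> present I i u \<longrightarrow> A I u i = A I t i))"

definition migration_times :: "bp_alg \<Rightarrow> bp_instance \<Rightarrow> nat \<Rightarrow> real set" where
  "migration_times A I i = {t. arr (I!i) < t \<and> t < arr (I!i) + dur (I!i) \<and>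
      (\<forall>\<epsilon>>0. \<exists>u. t - \<epsilon> < u \<and> u < t \<and> A I u i \<noteq> A I t i)}"

definition item_migrations :: "bp_alg \<Rightarrow> bp_instance \<Rightarrow> nat \<Rightarrow> ennreal" where
  "item_migrations A I i =
     (if finite (migration_times A I i) then of_nat (card (migration_times A I i)) else \<infinity>)"

definition migrations :: "bp_alg \<Rightarrow> bp_instance \<Rightarrow> ennreal" where
  "migrations A I = (\<Sum>i<length I. item_migrations A I i)"

definition open_bins :: "bp_alg \<Rightarrow> bp_instance \<Rightarrow> real \<Rightarrow> nat" where
  "open_bins A I t = card ((\<lambda>i. A I t i) ` {i. present I i t})"

definition alg_cost :: "bp_alg \<Rightarrow> bp_instance \<Rightarrow> ennreal" where
  "alg_cost A I = (\<integral>\<^sup>+ t. of_nat (open_bins A I t) \<partial>lborel)"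

definition opt_bins :: "bp_instance \<Rightarrow> real \<Rightarrow> nat" where
  "opt_bins I t = (LEAST k. \<exists>f::nat \<Rightarrow> nat. (\<forall>i. present I i t \<longrightarrow> f i < k) \<and>
      (\<forall>b. (\<Sum>i\<in>{i. present I i t \<and> f i = b}. isize (I!i)) \<le> 1))"

definition OPT :: "bp_instance \<Rightarrow> ennreal" where
  "OPT I = (\<integral>\<^sup>+ t. of_nat (opt_bins I t) \<partial>lborel)"

(* A randomized algorithm: a probability space of random seeds, and for each seed a
   deterministic online algorithm; cost and migration counts are random variables. *)
definition randomized_online_alg :: "'w measure \<Rightarrow> ('w \<Rightarrow> bp_alg) \<Rightarrow> bool" where
  "randomized_online_alg M A \<longleftrightarrow> prob_space M \<and>
     (\<forall>\<omega>\<in>space M. online_packing_alg (A \<omega>)) \<and>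
     (\<forall>I. valid_instance I \<longrightarrow>
        (\<lambda>\<omega>. alg_cost (A \<omega>) I) \<in> borel_measurable M \<and>
        (\<lambda>\<omega>. migrations (A \<omega>) I) \<in> borel_measurable M)"

definition expected_cost :: "'w measure \<Rightarrow> ('w \<Rightarrow> bp_alg) \<Rightarrow> bp_instance \<Rightarrow> ennreal" where
  "expected_cost M A I = (\<integral>\<^sup>+ \<omega>. alg_cost (A \<omega>) I \<partial>M)"

definition expected_migrations :: "'w measure \<Rightarrow> ('w \<Rightarrow> bp_alg) \<Rightarrow> bp_instance \<Rightarrow> ennreal" where
  "expected_migrations M A I = (\<integral>\<^sup>+ \<omega>. migrations (A \<omega>) I \<partial>M)"

definition competitive_ratio_at_least :: "'w measure \<Rightarrow> ('w \<Rightarrow> bp_alg) \<Rightarrow> real \<Rightarrow> bool" where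
  "competitive_ratio_at_least M A \<gamma> \<longleftrightarrow>
     (\<forall>\<beta><\<gamma>. \<exists>I. valid_instance I \<and> expected_cost M A I > ennreal \<beta> * OPT I)"

end

theory Submission
  imports Defs
begin

lemma card_image_pairs:
  fixes c :: "nat \<Rightarrow> nat"
  assumes "finite S"
  shows "2 * real (card S) \<le> 2 * real (card (c ` S)) + real (card {p \<in> S \<times> S. fst p \<noteq> snd p \<and> c (fst p) = c (snd p)})"
  using assms
proof (induction S rule: finite_induct)
  case empty
  then show ?case by simp
next
  case (insert z S)
  let ?P = "\<lambda>S. {p \<in> S \<times> S. fst p \<noteq> snd p \<and> c (fst p) = c (snd p)}"
  have finP: "finite (?P (insert z S))" using insert by (auto intro: finite_subset[of _ "insert z S \<times> insert z S"])
  have sub: "?P S \<subseteq> ?P (insert z S)" by auto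
  show ?case
  proof (cases "c z \<in> c ` S")
    case True
    then obtain w where w: "w \<in> S" "c w = c z" by auto
    have wz: "w \<noteq> z" using w insert by auto
    have s1: "?P S \<union> {(z,w),(w,z)} \<subseteq> ?P (insert z S)" using w wz by auto
    have c1: "card (?P S \<union> {(z,w),(w,z)}) = card (?P S) + 2"
    proof -
      have "?P S \<inter> {(z,w),(w,z)} = {}" using insert by auto
      moreover have "finite (?P S)" using insert by (auto intro: finite_subset[of _ "S \<times> S"])
      ultimately show ?thesis using wz by (simp add: card_Un_disjoint)
    qed
    have "card (?P S \<union> {(z,w),(w,z)}) \<le> card (?P (insert z S))" by (rule card_mono[OF finP s1])
    hence "card (?P S) + 2 \<le> card (?P (insert z S))" using c1 by simp
    moreover have "c ` insert z S = c ` S" using True by auto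
    ultimately show ?thesis using insert by simp
  next
    case False
    have "c ` insert z S = insert (c z) (c ` S)" by auto
    hence "card (c ` insert z S) = Suc (card (c ` S))" using False insert by simp
    moreover have "card (?P S) \<le> card (?P (insert z S))" using sub finP by (rule card_mono[rotated])
    ultimately show ?thesis using insert by simp
  qed
qed

lemma choose_pair_identity:
  assumes "2 \<le> n" "2 \<le> k"
  shows "((n - 2) choose (k - 2)) * (n * (n - 1)) = (n choose k) * (k * (k - 1))"
proof -
  have a: "k * (n choose k) = n * ((n - 1) choose (k - 1))"
    using binomial_absorption[of "k - 1" n] assms by simp
  have b: "(k - 1) * ((n - 1) choose (k - 1)) = (n - 1) * ((n - 2) choose (k - 2))"
    using binomial_absorption[of "k - 2" "n - 1"] assms by (simp add: numeral_2_eq_2 Suc_diff_Suc)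
  have "(n choose k) * (k * (k - 1)) = (k - 1) * (k * (n choose k))" by (simp add: ac_simps)
  also have "\<dots> = n * ((k - 1) * ((n - 1) choose (k - 1)))" using a by (simp add: ac_simps)
  also have "\<dots> = n * ((n - 1) * ((n - 2) choose (k - 2)))" using b by simp
  finally show ?thesis by (simp add: ac_simps)
qed

lemma subsets_pair_card:
  assumes "finite A" "x \<in> A" "y \<in> A" "x \<noteq> y"
  shows "card {S. S \<subseteq> A \<and> card S = k \<and> x \<in> S \<and> y \<in> S} * (card A * (card A - 1)) = (card A choose k) * (k * (k - 1))"
proof (cases "k < 2")
  case True
  have e: "{S. S \<subseteq> A \<and> card S = k \<and> x \<in> S \<and> y \<in> S} = {}"
  proof (rule ccontr)
    assume "{S. S \<subseteq> A \<and> card S = k \<and> x \<in> S \<and> y \<in> S} \<noteq> {}"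
    then obtain S where S: "S \<subseteq> A" "card S = k" "x \<in> S" "y \<in> S" by auto
    have "finite S" using S assms finite_subset by auto
    hence "card {x, y} \<le> card S" using S by (intro card_mono) auto
    thus False using S True assms by simp
  qed
  moreover have kk: "k * (k - 1) = 0" using True by (cases k) auto
  show ?thesis unfolding e kk by simp
next
  case False
  have n2: "2 \<le> card A"
  proof -
    have "card {x, y} \<le> card A" using assms by (intro card_mono) auto
    thus ?thesis using assms by simp
  qed
  have bij: "bij_betw (\<lambda>S. S - {x, y}) {S. S \<subseteq> A \<and> card S = k \<and> x \<in> S \<and> y \<in> S}
     {T. T \<subseteq> A - {x, y} \<and> card T = k - 2}"
  proof (rule bij_betw_byWitness[where f' = "\<lambda>T. T \<union> {x, y}"])
    show "\<forall>S\<in>{S. S \<subseteq> A \<and> card S = k \<and> x \<in> S \<and> y \<in> S}. S - {x, y} \<union> {x, y} = S" by auto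
    show "\<forall>T\<in>{T. T \<subseteq> A - {x, y} \<and> card T = k - 2}. T \<union> {x, y} - {x, y} = T" by auto
    show "(\<lambda>S. S - {x, y}) ` {S. S \<subseteq> A \<and> card S = k \<and> x \<in> S \<and> y \<in> S} \<subseteq> {T. T \<subseteq> A - {x, y} \<and> card T = k - 2}"
    proof (rule image_subsetI)
      fix S assume "S \<in> {S. S \<subseteq> A \<and> card S = k \<and> x \<in> S \<and> y \<in> S}"
      hence S: "S \<subseteq> A" "card S = k" "x \<in> S" "y \<in> S" by auto
      have "finite S" using S assms finite_subset by auto
      hence "card (S - {x, y}) = k - 2" using S assms by (subst card_Diff_subset) auto
      thus "S - {x, y} \<in> {T. T \<subseteq> A - {x, y} \<and> card T = k - 2}" using S by auto
    qed
    show "(\<lambda>T. T \<union> {x, y}) ` {T. T \<subseteq> A - {x, y} \<and> card T = k - 2} \<subseteq> {S. S \<subseteq> A \<and> card S = k \<and> x \<in> S \<and> y \<in> S}"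
    proof (rule image_subsetI)
      fix T assume "T \<in> {T. T \<subseteq> A - {x, y} \<and> card T = k - 2}"
      hence T: "T \<subseteq> A - {x, y}" "card T = k - 2" by auto
      have "finite T" using T assms finite_subset by auto
      hence "card (T \<union> {x, y}) = card T + 2" using T assms by (subst card_Un_disjoint) auto
      thus "T \<union> {x, y} \<in> {S. S \<subseteq> A \<and> card S = k \<and> x \<in> S \<and> y \<in> S}" using T assms False by auto
    qed
  qed
  have "card {S. S \<subseteq> A \<and> card S = k \<and> x \<in> S \<and> y \<in> S} = card {T. T \<subseteq> A - {x, y} \<and> card T = k - 2}"
    using bij_betw_same_card[OF bij] .
  also have "\<dots> = (card A - 2) choose (k - 2)"
    using assms by (subst n_subsets) (auto simp: numeral_2_eq_2)
  finally show ?thesis using choose_pair_identity[OF n2] False by simp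
qed


lemma avg_bound:
  fixes c :: "nat \<Rightarrow> nat" and K :: nat
  assumes K: "1 \<le> K" and cls: "\<And>b. card {i. i < K*K \<and> c i = b} \<le> K"
  shows "real (card {S. S \<subseteq> {..<K*K} \<and> card S = K}) * (K+1)
     \<le> 2 * (\<Sum>S\<in>{S. S \<subseteq> {..<K*K} \<and> card S = K}. real (card (c ` S)))"
proof -
  define N where "N = K * K"
  define F where "F = {S. S \<subseteq> {..<N} \<and> card S = K}"
  define OP where "OP = {p \<in> {..<N} \<times> {..<N}. fst p \<noteq> snd p \<and> c (fst p) = c (snd p)}"
  define Q where "Q = (\<lambda>p. card {S \<in> F. fst p \<in> S \<and> snd p \<in> S})"
  have finF: "finite F" unfolding F_def by (rule finite_subset[of _ "Pow {..<N}"]) auto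
  have finOP: "finite OP" unfolding OP_def by (rule finite_subset[of _ "{..<N} \<times> {..<N}"]) auto
  have h1: "2 * real K - real (card (Set.filter (\<lambda>p. fst p \<in> S \<and> snd p \<in> S) OP)) \<le> 2 * real (card (c ` S))"
    if "S \<in> F" for S
  proof -
    have "S \<subseteq> {..<N}" "card S = K" using that unfolding F_def by auto
    moreover have "finite S" using \<open>S \<subseteq> {..<N}\<close> finite_subset by auto
    moreover have "{p \<in> S \<times> S. fst p \<noteq> snd p \<and> c (fst p) = c (snd p)} = Set.filter (\<lambda>p. fst p \<in> S \<and> snd p \<in> S) OP"
      using \<open>S \<subseteq> {..<N}\<close> unfolding OP_def by auto
    ultimately show ?thesis using card_image_pairs[of S c] by simp
  qed
  have swap: "(\<Sum>S\<in>F. real (card (Set.filter (\<lambda>p. fst p \<in> S \<and> snd p \<in> S) OP))) = (\<Sum>p\<in>OP. real (Q p))"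
  proof -
    have "(\<Sum>S\<in>F. real (card (Set.filter (\<lambda>p. fst p \<in> S \<and> snd p \<in> S) OP)))
        = (\<Sum>S\<in>F. \<Sum>p\<in>OP. (if fst p \<in> S \<and> snd p \<in> S then 1 else 0))"
      using finOP by (intro sum.cong refl) (simp add: sum.If_cases Int_def)
    also have "\<dots> = (\<Sum>p\<in>OP. \<Sum>S\<in>F. (if fst p \<in> S \<and> snd p \<in> S then 1 else 0))" by (rule sum.swap)
    also have "\<dots> = (\<Sum>p\<in>OP. real (Q p))"
      unfolding Q_def using finF by (intro sum.cong refl) (simp add: sum.If_cases Int_def)
    finally show ?thesis .
  qed
  have Qp: "real (Q p) * (real N * (real N - 1)) = real (card F) * (real K * (real K - 1))" if "p \<in> OP" for p
  proof -
    have p: "fst p < N" "snd p < N" "fst p \<noteq> snd p" using that unfolding OP_def by auto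
    have eq: "{S \<in> F. fst p \<in> S \<and> snd p \<in> S} = {S. S \<subseteq> {..<N} \<and> card S = K \<and> fst p \<in> S \<and> snd p \<in> S}"
      unfolding F_def by auto
    have "Q p * (card {..<N} * (card {..<N} - 1)) = (card {..<N} choose K) * (K * (K - 1))"
      unfolding Q_def eq using subsets_pair_card[of "{..<N}" "fst p" "snd p" K] p by simp
    moreover have "card F = card {..<N} choose K" unfolding F_def by (subst n_subsets) auto
    moreover have "1 \<le> N" unfolding N_def using K by simp
    ultimately have "Q p * (N * (N - 1)) = card F * (K * (K - 1))" by simp
    hence "real (Q p * (N * (N - 1))) = real (card F * (K * (K - 1)))" by metis
    thus ?thesis using K \<open>1 \<le> N\<close> by (simp add: of_nat_diff)
  qed
  have cardOP: "real (card OP) \<le> real N * (real K - 1)"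
  proof -
    have "OP = (SIGMA x:{..<N}. {y. y < N \<and> y \<noteq> x \<and> c y = c x})" unfolding OP_def by auto
    hence "card OP = (\<Sum>x<N. card {y. y < N \<and> y \<noteq> x \<and> c y = c x})"
      by (simp add: card_SigmaI)
    also have "\<dots> \<le> (\<Sum>x<N. K - 1)"
    proof (intro sum_mono)
      fix x assume "x \<in> {..<N}"
      have "{y. y < N \<and> y \<noteq> x \<and> c y = c x} = {y. y < N \<and> c y = c x} - {x}" by auto
      moreover have "x \<in> {y. y < N \<and> c y = c x}" using \<open>x \<in> {..<N}\<close> by auto
      moreover have "card {y. y < N \<and> c y = c x} \<le> K" using cls[of "c x"] unfolding N_def .
      ultimately show "card {y. y < N \<and> y \<noteq> x \<and> c y = c x} \<le> K - 1" by (simp add: card_Diff_singleton)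
    qed
    also have "\<dots> = N * (K - 1)" by simp
    finally show ?thesis using K by (metis of_nat_1 of_nat_diff of_nat_le_iff of_nat_mult)
  qed
  have sumQ: "(\<Sum>p\<in>OP. real (Q p)) \<le> real (card F) * (real K - 1)"
  proof (cases "K = 1")
    case True
    hence "card OP = 0" using cardOP by simp
    hence "OP = {}" using finOP by simp
    thus ?thesis using True by simp
  next
    case False
    hence K2: "2 \<le> K" using K by simp
    have "(\<Sum>p\<in>OP. real (Q p)) * (real N * (real N - 1)) = real (card OP) * (real (card F) * (real K * (real K - 1)))"
      using Qp by (simp add: sum_distrib_right)
    also have "\<dots> \<le> (real N * (real K - 1)) * (real (card F) * (real K * (real K - 1)))"
      using cardOP K by (intro mult_right_mono) auto
    finally have A: "(\<Sum>p\<in>OP. real (Q p)) * (real N * (real N - 1)) \<le> (real N * (real K - 1)) * (real (card F) * (real K * (real K - 1)))" .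
    have NK: "real N = real K * real K" unfolding N_def by simp
    have Npos: "real N > 0" using K NK by simp
    have B: "(\<Sum>p\<in>OP. real (Q p)) * (real N - 1) \<le> (real K - 1) * (real (card F) * (real K * (real K - 1)))"
      using A Npos by (simp add: mult.assoc mult_le_cancel_left_pos)
    define s where "s = (\<Sum>p\<in>OP. real (Q p))"
    have eqN: "real N - 1 = (real K - 1) * (real K + 1)" using NK by (simp add: algebra_simps)
    have e2: "s * (real N - 1) = (real K - 1) * (s * (real K + 1))" unfolding eqN by (simp add: mult_ac)
    have "(real K - 1) * (s * (real K + 1)) \<le> (real K - 1) * (real (card F) * (real K * (real K - 1)))"
      using B e2 unfolding s_def by simp
    moreover have "real K - 1 > 0" using K2 by simp
    ultimately have "s * (real K + 1) \<le> real (card F) * (real K * (real K - 1))"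
      by (simp add: mult_le_cancel_left_pos)
    hence "(\<Sum>p\<in>OP. real (Q p)) * (real K + 1) \<le> real (card F) * (real K * (real K - 1))"
      unfolding s_def .
    also have "\<dots> \<le> real (card F) * ((real K + 1) * (real K - 1))"
      using K2 by (intro mult_left_mono) auto
    finally have "(real K + 1) * (\<Sum>p\<in>OP. real (Q p)) \<le> (real K + 1) * (real (card F) * (real K - 1))"
      by (simp add: mult_ac)
    moreover have "real K + 1 > 0" by simp
    ultimately show ?thesis by (simp add: mult_le_cancel_left_pos)
  qed
  have "2 * real K * real (card F) - (\<Sum>p\<in>OP. real (Q p)) \<le> (\<Sum>S\<in>F. 2 * real (card (c ` S)))"
  proof -
    have "(\<Sum>S\<in>F. 2 * real K - real (card (Set.filter (\<lambda>p. fst p \<in> S \<and> snd p \<in> S) OP))) \<le> (\<Sum>S\<in>F. 2 * real (card (c ` S)))"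
      using h1 by (rule sum_mono)
    thus ?thesis using swap by (simp add: sum_subtractf mult_ac)
  qed
  hence "real (card F) * (K+1) \<le> 2 * (\<Sum>S\<in>F. real (card (c ` S)))" using sumQ by (simp add: algebra_simps sum_distrib_left)
  thus ?thesis unfolding F_def N_def .
qed


lemma const_no_mig:
  assumes on: "online_packing_alg B" and v: "valid_instance I" and i: "i < length I"
    and nm: "migration_times B I i = {}"
    and t: "arr (I!i) \<le> t" "t < arr (I!i) + dur (I!i)"
  shows "B I t i = B I (arr (I!i)) i"
proof -
  define a where "a = arr (I!i)"
  define e where "e = arr (I!i) + dur (I!i)"
  define f where "f = (\<lambda>u. B I u i)"
  have pres: "present I i u \<longleftrightarrow> a \<le> u \<and> u < e" for u
    unfolding present_def a_def e_def using i by auto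
  have rc: "\<forall>I i t. valid_instance I \<longrightarrow> present I i t \<longrightarrow>
         (\<exists>\<epsilon>>0. \<forall>u. t \<le> u \<longrightarrow> u < t + \<epsilon> \<longrightarrow> present I i u \<longrightarrow> B I u i = B I t i)"
    using on unfolding online_packing_alg_def by blast
  have "f t = f a"
  proof (rule connected_local_const[of "{a..<e}" t a f])
    show "connected {a..<e}" by simp
    show "t \<in> {a..<e}" using t unfolding a_def e_def by simp
    show "a \<in> {a..<e}" using t unfolding a_def e_def by simp
    show "\<forall>x\<in>{a..<e}. eventually (\<lambda>y. f x = f y) (at x within {a..<e})"
    proof
      fix x assume x: "x \<in> {a..<e}"
      obtain e1 where e1: "e1 > 0" "\<And>u. x \<le> u \<Longrightarrow> u < x + e1 \<Longrightarrow> present I i u \<Longrightarrow> B I u i = B I x i"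
        using rc v pres x by (metis atLeastLessThan_iff)
      obtain e2 where e2: "e2 > 0" "\<And>u. a < x \<Longrightarrow> x - e2 < u \<Longrightarrow> u < x \<Longrightarrow> B I u i = B I x i"
      proof (cases "a < x")
        case True
        have "x \<notin> migration_times B I i" using nm by simp
        hence "\<not> (\<forall>\<epsilon>>0. \<exists>u. x - \<epsilon> < u \<and> u < x \<and> B I u i \<noteq> B I x i)"
          using True x unfolding migration_times_def a_def e_def by auto
        then obtain \<epsilon> where "\<epsilon> > 0" "\<And>u. x - \<epsilon> < u \<Longrightarrow> u < x \<Longrightarrow> B I u i = B I x i" by blast
        thus ?thesis using that by blast
      next
        case False
        thus ?thesis using that[of 1] by simp
      qed
      show "eventually (\<lambda>y. f x = f y) (at x within {a..<e})"
        unfolding eventually_at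
      proof (intro exI[of _ "min e1 e2"] conjI ballI impI)
        show "min e1 e2 > 0" using e1 e2 by simp
        fix y assume y: "y \<in> {a..<e}" "y \<noteq> x \<and> dist y x < min e1 e2"
        show "f x = f y"
        proof (cases "x < y")
          case True
          thus ?thesis using e1(2)[of y] y pres unfolding f_def dist_real_def by auto
        next
          case False
          hence "y < x" using y by simp
          thus ?thesis using e2(2)[of y] y x unfolding f_def dist_real_def by auto
        qed
      qed
    qed
  qed
  thus ?thesis unfolding f_def a_def .
qed

definition inst :: "nat \<Rightarrow> real \<Rightarrow> nat set \<Rightarrow> bp_instance" where
  "inst K T S = map (\<lambda>i. (0, 1 / real K, if i \<in> S then 1 + T else 1)) [0..<K*K]"

lemma inst_len[simp]: "length (inst K T S) = K * K"
  by (simp add: inst_def)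

lemma inst_nth:
  assumes "i < K * K"
  shows "arr (inst K T S ! i) = 0" "isize (inst K T S ! i) = 1 / real K"
    "dur (inst K T S ! i) = (if i \<in> S then 1 + T else 1)"
  using assms by (simp_all add: inst_def arr_def isize_def dur_def)

lemma inst_valid:
  assumes "1 \<le> K" "0 < T"
  shows "valid_instance (inst K T S)"
proof -
  have "map arr (inst K T S) = replicate (K*K) 0"
    unfolding inst_def arr_def by (simp add: comp_def map_replicate_const)
  moreover have "\<forall>x\<in>set (inst K T S). 0 \<le> arr x \<and> 0 \<le> isize x \<and> isize x \<le> 1 \<and> 0 < dur x"
    using assms by (auto simp: inst_def arr_def isize_def dur_def)
  ultimately show ?thesis unfolding valid_instance_def by (simp add: sorted_replicate)
qed

lemma inst_present:
  assumes "0 < T"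
  shows "present (inst K T S) i t \<longleftrightarrow> i < K * K \<and> 0 \<le> t \<and> t < (if i \<in> S then 1 + T else 1)"
  unfolding present_def using inst_nth[of i K T S] by auto

lemma inst_view0:
  assumes "0 < T"
  shows "view (inst K T S) 0 = view (inst K T S') 0"
proof
  fix i
  show "view (inst K T S) 0 i = view (inst K T S') 0 i"
    using inst_nth[of i K T S] inst_nth[of i K T S'] assms
    unfolding view_def by auto
qed


lemma inst_sum_size:
  assumes "X \<subseteq> {..<K*K}"
  shows "(\<Sum>i\<in>X. isize (inst K T S ! i)) = real (card X) / real K"
proof -
  have "(\<Sum>i\<in>X. isize (inst K T S ! i)) = (\<Sum>i\<in>X. 1 / real K)"
    using assms by (intro sum.cong refl) (auto simp: inst_nth)
  thus ?thesis by simp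
qed

lemma class_bound:
  assumes on: "online_packing_alg B" and K: "1 \<le> K" and T: "0 < T"
  shows "card {i. i < K*K \<and> B (inst K T S0) 0 i = b} \<le> K"
proof -
  let ?I = "inst K T S0"
  have cap: "(\<Sum>i\<in>{i. present ?I i 0 \<and> B ?I 0 i = b}. isize (?I!i)) \<le> 1"
    using on inst_valid[OF K T] unfolding online_packing_alg_def by blast
  have eq: "{i. present ?I i 0 \<and> B ?I 0 i = b} = {i. i < K*K \<and> B ?I 0 i = b}"
    using T by (auto simp: inst_present)
  have "real (card {i. i < K*K \<and> B ?I 0 i = b}) / real K \<le> 1"
    using cap unfolding eq by (subst inst_sum_size[symmetric]) auto
  hence "real (card {i. i < K*K \<and> B ?I 0 i = b}) \<le> real K" using K by (simp add: divide_le_eq)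
  thus ?thesis by simp
qed

lemma opt_bins_le:
  assumes "\<forall>i. present I i t \<longrightarrow> f i < k" "\<forall>b. (\<Sum>i\<in>{i. present I i t \<and> f i = b}. isize (I!i)) \<le> 1"
  shows "opt_bins I t \<le> k"
  unfolding opt_bins_def by (rule Least_le) (use assms in blast)

lemma opt_ub:
  assumes K: "1 \<le> K" and T: "0 < T" and S: "S \<subseteq> {..<K*K}" "card S \<le> K"
  shows "OPT (inst K T S) \<le> ennreal (real K + T)"
proof -
  let ?I = "inst K T S"
  have pw: "ennreal (real (opt_bins ?I t)) \<le> ennreal (real K) * indicator {0..<1} t + indicator {1..<1+T} t" for t
  proof -
    have allK: "opt_bins ?I t \<le> K"
    proof (rule opt_bins_le[where f = "\<lambda>i. i div K"])
      show "\<forall>i. present ?I i t \<longrightarrow> i div K < K" using T K by (auto simp: inst_present less_mult_imp_div_less)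
      show "\<forall>b. (\<Sum>i\<in>{i. present ?I i t \<and> i div K = b}. isize (?I!i)) \<le> 1"
      proof
        fix b
        have sub: "{i. present ?I i t \<and> i div K = b} \<subseteq> {..<K*K}" using T by (auto simp: inst_present)
        have sub2: "{i. present ?I i t \<and> i div K = b} \<subseteq> {b*K..<b*K+K}"
        proof
          fix i assume "i \<in> {i. present ?I i t \<and> i div K = b}"
          hence "i div K = b" by simp
          moreover have "i = (i div K) * K + i mod K" by simp
          moreover have "i mod K < K" using K by simp
          ultimately show "i \<in> {b*K..<b*K+K}" by (metis atLeastLessThan_iff le_add1 add_less_cancel_left)
        qed
        have "card {i. present ?I i t \<and> i div K = b} \<le> card {b*K..<b*K+K}" by (rule card_mono[OF _ sub2]) simp
        hence "real (card {i. present ?I i t \<and> i div K = b}) \<le> real K" by simp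
        thus "(\<Sum>i\<in>{i. present ?I i t \<and> i div K = b}. isize (?I!i)) \<le> 1"
          using K by (simp add: inst_sum_size[OF sub] divide_le_eq)
      qed
    qed
    show ?thesis
    proof (cases "0 \<le> t \<and> t < 1")
      case True
      thus ?thesis using allK by (simp add: indicator_def)
    next
      case False
      show ?thesis
      proof (cases "1 \<le> t \<and> t < 1 + T")
        case True
        have "opt_bins ?I t \<le> 1"
        proof (rule opt_bins_le[where f = "\<lambda>i. 0"])
          show "\<forall>i. present ?I i t \<longrightarrow> (0::nat) < 1" by simp
          show "\<forall>b. (\<Sum>i\<in>{i. present ?I i t \<and> (0::nat) = b}. isize (?I!i)) \<le> 1"
          proof
            fix b :: nat
            have sub: "{i. present ?I i t \<and> (0::nat) = b} \<subseteq> S" using T True by (auto simp: inst_present split: if_splits)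
            have sub': "{i. present ?I i t \<and> (0::nat) = b} \<subseteq> {..<K*K}" using sub S by auto
            have "card {i. present ?I i t \<and> (0::nat) = b} \<le> card S"
              using S finite_subset[OF S(1)] by (intro card_mono[OF _ sub]) auto
            hence "real (card {i. present ?I i t \<and> (0::nat) = b}) \<le> real K" using S by simp
            thus "(\<Sum>i\<in>{i. present ?I i t \<and> (0::nat) = b}. isize (?I!i)) \<le> 1"
              unfolding inst_sum_size[OF sub'] using K by (simp add: divide_le_eq)
          qed
        qed
        hence "real (opt_bins ?I t) \<le> 1" by simp
        thus ?thesis using True False by (simp add: indicator_def)
      next
        case False2: False
        have "opt_bins ?I t \<le> 0"
          by (rule opt_bins_le[where f = "\<lambda>i. 0"]) (use T False False2 in \<open>auto simp: inst_present\<close>)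
        thus ?thesis by simp
      qed
    qed
  qed
  have "OPT ?I \<le> (\<integral>\<^sup>+ t. ennreal (real K) * indicator {0..<1} t + indicator {1..<1+T} t \<partial>lborel)"
    unfolding OPT_def by (rule nn_integral_mono) (use pw in \<open>simp add: ennreal_of_nat_eq_real_of_nat\<close>)
  also have "\<dots> = (\<integral>\<^sup>+ t. ennreal (real K) * indicator {0..<1::real} t \<partial>lborel) + (\<integral>\<^sup>+ t. indicator {1..<1+T} t \<partial>lborel)"
    by (subst nn_integral_add) auto
  also have "\<dots> = ennreal (real K) + ennreal T"
    using T by (simp add: nn_integral_cmult_indicator)
  also have "\<dots> = ennreal (real K + T)" using T by (simp add: ennreal_plus)
  finally show ?thesis .
qed


lemma item_mig_ge1:
  assumes "migration_times B I i \<noteq> {}"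
  shows "1 \<le> item_migrations B I i"
proof (cases "finite (migration_times B I i)")
  case True
  hence "card (migration_times B I i) \<ge> 1" using assms by (simp add: Suc_leI card_gt_0_iff)
  thus ?thesis using True unfolding item_migrations_def by simp
next
  case False
  thus ?thesis unfolding item_migrations_def by simp
qed

lemma cost_lb:
  assumes on: "online_packing_alg B" and K: "1 \<le> K" and T: "0 < T" and S: "S \<subseteq> {..<K*K}"
  shows "ennreal T * of_nat (card ((\<lambda>i. B (inst K T {}) 0 i) ` S))
     \<le> alg_cost B (inst K T S) + ennreal T * migrations B (inst K T S)"
proof -
  let ?I = "inst K T S"
  define c where "c = (\<lambda>i. B (inst K T {}) 0 i)"
  define Mg where "Mg = {i\<in>S. migration_times B ?I i \<noteq> {}}"
  have v: "valid_instance ?I" using inst_valid[OF K T] .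
  have onl: "\<forall>I I' t i. valid_instance I \<longrightarrow> valid_instance I' \<longrightarrow> view I t = view I' t \<longrightarrow>
         present I i t \<longrightarrow> B I t i = B I' t i"
    using on unfolding online_packing_alg_def by blast
  have c0: "B ?I 0 i = c i" if "i < K*K" for i
  proof -
    have "present ?I i 0" using that T by (simp add: inst_present)
    thus ?thesis unfolding c_def using onl v inst_valid[OF K T, of "{}"] inst_view0[OF T, of K S "{}"] by blast
  qed
  have finS: "finite S" using S finite_subset by auto
  have keep: "B ?I t i = c i" if "i \<in> S - Mg" "1 \<le> t" "t < 1 + T" for i t
  proof -
    have i: "i < K*K" using that S by auto
    have "B ?I t i = B ?I (arr (?I!i)) i"
      by (rule const_no_mig[OF on v]) (use that i T in \<open>auto simp: Mg_def inst_nth\<close>)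
    thus ?thesis using c0[OF i] by (simp add: inst_nth[OF i])
  qed
  have ob: "card (c ` (S - Mg)) \<le> open_bins B ?I t" if "1 \<le> t" "t < 1 + T" for t
  proof -
    have "c ` (S - Mg) \<subseteq> (\<lambda>i. B ?I t i) ` {i. present ?I i t}"
    proof
      fix x assume "x \<in> c ` (S - Mg)"
      then obtain i where i: "i \<in> S - Mg" "x = c i" by auto
      have "present ?I i t" using i S that T by (auto simp: inst_present)
      thus "x \<in> (\<lambda>i. B ?I t i) ` {i. present ?I i t}" using keep[OF i(1) that] i by force
    qed
    moreover have "finite {i. present ?I i t}"
      by (rule finite_subset[of _ "{..<K*K}"]) (use T in \<open>auto simp: inst_present\<close>)
    ultimately show ?thesis unfolding open_bins_def by (intro card_mono) auto
  qed
  have costb: "of_nat (card (c ` (S - Mg))) * ennreal T \<le> alg_cost B ?I"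
  proof -
    have "(\<integral>\<^sup>+ t. of_nat (card (c ` (S - Mg))) * indicator {1..<1+T} t \<partial>lborel) \<le> alg_cost B ?I"
      unfolding alg_cost_def
    proof (rule nn_integral_mono)
      fix t :: real
      show "of_nat (card (c ` (S - Mg))) * indicator {1..<1+T} t \<le> (of_nat (open_bins B ?I t) :: ennreal)"
        using ob[of t] by (auto simp: indicator_def)
    qed
    moreover have "(\<integral>\<^sup>+ t. of_nat (card (c ` (S - Mg))) * indicator {1..<1+T} t \<partial>lborel) = of_nat (card (c ` (S - Mg))) * ennreal T"
      using T by (simp add: nn_integral_cmult_indicator)
    ultimately show ?thesis by simp
  qed
  have migb: "of_nat (card Mg) \<le> migrations B ?I"
  proof -
    have sub: "Mg \<subseteq> {..<K*K}" using S unfolding Mg_def by auto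
    have "of_nat (card Mg) = (\<Sum>i\<in>Mg. (1::ennreal))" by simp
    also have "\<dots> \<le> (\<Sum>i\<in>Mg. item_migrations B ?I i)"
      by (rule sum_mono) (auto simp: Mg_def intro: item_mig_ge1)
    also have "\<dots> \<le> (\<Sum>i<K*K. item_migrations B ?I i)"
      by (rule sum_mono2) (use sub in auto)
    finally show ?thesis unfolding migrations_def by simp
  qed
  have cardb: "card (c ` S) \<le> card (c ` (S - Mg)) + card Mg"
  proof -
    have "c ` S \<subseteq> c ` (S - Mg) \<union> c ` Mg" by auto
    hence "card (c ` S) \<le> card (c ` (S - Mg) \<union> c ` Mg)"
      using finS by (intro card_mono) (auto simp: Mg_def)
    also have "\<dots> \<le> card (c ` (S - Mg)) + card (c ` Mg)" by (rule card_Un_le)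
    also have "card (c ` Mg) \<le> card Mg" by (rule card_image_le) (use finS in \<open>auto simp: Mg_def\<close>)
    finally show ?thesis by simp
  qed
  have "ennreal T * of_nat (card (c ` S)) \<le> ennreal T * (of_nat (card (c ` (S - Mg))) + of_nat (card Mg))"
    using cardb by (intro mult_left_mono) (auto simp flip: of_nat_add)
  also have "\<dots> = of_nat (card (c ` (S - Mg))) * ennreal T + ennreal T * of_nat (card Mg)"
    by (simp add: distrib_left mult.commute)
  also have "\<dots> \<le> alg_cost B ?I + ennreal T * migrations B ?I"
    using costb migb by (intro add_mono mult_left_mono) auto
  finally show ?thesis unfolding c_def .
qed


theorem theorem3:
  fixes \<alpha> :: real and M :: "'w measure" and A :: "'w \<Rightarrow> bp_alg"
  assumes "0 < \<alpha>" and "\<alpha> < 1"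
    and "randomized_online_alg M A"
    and "\<forall>I. valid_instance I \<longrightarrow> expected_migrations M A I \<le> ennreal (\<alpha> * real (length I))"
  shows "competitive_ratio_at_least M A (real_of_int \<lfloor>1 / (4 * \<alpha>)\<rfloor> / 4)"
proof -
  have pM: "prob_space M" and onA: "\<And>\<omega>. \<omega> \<in> space M \<Longrightarrow> online_packing_alg (A \<omega>)"
    and meas: "\<And>I. valid_instance I \<Longrightarrow> (\<lambda>\<omega>. alg_cost (A \<omega>) I) \<in> borel_measurable M"
    and meas2: "\<And>I. valid_instance I \<Longrightarrow> (\<lambda>\<omega>. migrations (A \<omega>) I) \<in> borel_measurable M"
    using assms(3) unfolding randomized_online_alg_def by auto
  define k where "k = \<lfloor>1 / (4 * \<alpha>)\<rfloor>"
  have k0: "0 \<le> k" unfolding k_def using assms(1) by simp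
  define K where "K = max 1 (nat k)"
  have K1: "1 \<le> K" unfolding K_def by simp
  define F where "F = {S. S \<subseteq> {..<K*K} \<and> card S = K}"
  have finF: "finite F" unfolding F_def by (rule finite_subset[of _ "Pow {..<K*K}"]) auto
  have cardF: "card F = (K*K) choose K" unfolding F_def by (subst n_subsets) auto
  have Fpos: "card F > 0" unfolding cardF using K1 by (simp add: zero_less_binomial)
  have FS: "S \<subseteq> {..<K*K}" "card S = K" if "S \<in> F" for S using that unfolding F_def by auto
  show ?thesis unfolding competitive_ratio_at_least_def
  proof (intro allI impI)
    fix \<beta> assume "\<beta> < real_of_int \<lfloor>1 / (4 * \<alpha>)\<rfloor> / 4"
    hence \<beta>: "\<beta> < real_of_int k / 4" unfolding k_def .
    define b where "b = max 0 \<beta>"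
    have b0: "0 \<le> b" unfolding b_def by simp
    have eb: "ennreal \<beta> = ennreal b" unfolding b_def by (simp add: ennreal_max_0)
    define D where "D = (real K + 1) / 2 - \<alpha> * real (K*K) - b"
    have D: "D > 0"
    proof (cases "k = 0")
      case True
      hence "K = 1" unfolding K_def by simp
      moreover have "b = 0" using \<beta> True unfolding b_def by simp
      ultimately show ?thesis unfolding D_def using assms(2) by simp
    next
      case False
      hence kK: "real K = real_of_int k" unfolding K_def using k0 by simp
      have "real_of_int k \<le> 1 / (4 * \<alpha>)" unfolding k_def by simp
      hence "real_of_int k * (4 * \<alpha>) \<le> 1" using assms(1) by (simp add: le_divide_eq)
      hence ak: "\<alpha> * real K \<le> 1 / 4" using kK by (simp add: mult_ac)
      have "\<alpha> * real (K*K) = (\<alpha> * real K) * real K" by simp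
      also have "\<dots> \<le> 1/4 * real K" using ak by (intro mult_right_mono) auto
      finally have a2: "\<alpha> * real (K*K) \<le> real K / 4" by simp
      have "b < real K / 4" using \<beta> kK k0 False unfolding b_def by auto
      hence "b + \<alpha> * real (K*K) < real K / 4 + real K / 4" using a2 by (rule add_less_le_mono)
      hence h: "b + \<alpha> * real (K*K) < (real K + 1) / 2" by (simp add: field_simps)
      have "D = (real K + 1) / 2 - (b + \<alpha> * real (K*K))" unfolding D_def by simp
      thus ?thesis using h by simp
    qed
    define T where "T = b * real K / D + 1"
    have "0 \<le> b * real K / D" using b0 D by (intro divide_nonneg_pos mult_nonneg_nonneg) auto
    hence T: "T > 0" unfolding T_def by linarith
    have TD: "T * D > b * real K" unfolding T_def using D by (simp add: field_simps)
    show "\<exists>I. valid_instance I \<and> expected_cost M A I > ennreal \<beta> * OPT I"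
    proof (rule ccontr)
      assume "\<not> (\<exists>I. valid_instance I \<and> expected_cost M A I > ennreal \<beta> * OPT I)"
      hence le: "expected_cost M A (inst K T S) \<le> ennreal \<beta> * OPT (inst K T S)" for S
        using inst_valid[OF K1 T] by (meson not_less)
      have pw: "ennreal (T * real (card F) * (real K + 1) / 2)
          \<le> (\<Sum>S\<in>F. alg_cost (A \<omega>) (inst K T S) + ennreal T * migrations (A \<omega>) (inst K T S))"
        if "\<omega> \<in> space M" for \<omega>
      proof -
        let ?c = "\<lambda>i. A \<omega> (inst K T {}) 0 i"
        have on: "online_packing_alg (A \<omega>)" using onA that .
        define X where "X = (\<Sum>S\<in>F. real (card (?c ` S)))"
        have A0: "real (card F) * (K+1) \<le> 2 * X"
          unfolding F_def X_def by (rule avg_bound[OF K1 class_bound[OF on K1 T]])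
        have A1: "real (card F) * (real K + 1) \<le> 2 * X" using A0 by (simp add: add.commute)
        have "T * (real (card F) * (real K + 1)) \<le> T * (2 * X)"
          using A1 T by (intro mult_left_mono) auto
        hence "T * real (card F) * (real K + 1) / 2 \<le> T * X" by (simp add: field_simps)
        moreover have "T * X = (\<Sum>S\<in>F. T * real (card (?c ` S)))" unfolding X_def by (simp add: sum_distrib_left)
        ultimately have "T * real (card F) * (real K + 1) / 2 \<le> (\<Sum>S\<in>F. T * real (card (?c ` S)))" by simp
        hence "ennreal (T * real (card F) * (real K + 1) / 2) \<le> ennreal (\<Sum>S\<in>F. T * real (card (?c ` S)))"
          using T by (intro ennreal_leI) 
        also have "\<dots> = (\<Sum>S\<in>F. ennreal T * of_nat (card (?c ` S)))"
          using T by (subst sum_ennreal[symmetric]) (auto simp: ennreal_mult'' ennreal_of_nat_eq_real_of_nat)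
        also have "\<dots> \<le> (\<Sum>S\<in>F. alg_cost (A \<omega>) (inst K T S) + ennreal T * migrations (A \<omega>) (inst K T S))"
          by (rule sum_mono) (rule cost_lb[OF on K1 T FS(1)])
        finally show ?thesis .
      qed
      have "ennreal (T * real (card F) * (real K + 1) / 2)
           = (\<integral>\<^sup>+ \<omega>. ennreal (T * real (card F) * (real K + 1) / 2) \<partial>M)"
        using pM by (simp add: prob_space.emeasure_space_1)
      also have "\<dots> \<le> (\<integral>\<^sup>+ \<omega>. (\<Sum>S\<in>F. alg_cost (A \<omega>) (inst K T S) + ennreal T * migrations (A \<omega>) (inst K T S)) \<partial>M)"
        by (rule nn_integral_mono) (rule pw)
      also have "\<dots> = (\<Sum>S\<in>F. expected_cost M A (inst K T S) + ennreal T * expected_migrations M A (inst K T S))"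
      proof -
        have m1: "(\<lambda>\<omega>. alg_cost (A \<omega>) (inst K T S)) \<in> borel_measurable M" for S
          using meas[OF inst_valid[OF K1 T]] .
        have m2: "(\<lambda>\<omega>. migrations (A \<omega>) (inst K T S)) \<in> borel_measurable M" for S
          using meas2[OF inst_valid[OF K1 T]] .
        have m3: "(\<lambda>\<omega>. ennreal T * migrations (A \<omega>) (inst K T S)) \<in> borel_measurable M" for S
          using m2 by simp
        have "(\<integral>\<^sup>+ \<omega>. (\<Sum>S\<in>F. alg_cost (A \<omega>) (inst K T S) + ennreal T * migrations (A \<omega>) (inst K T S)) \<partial>M)
            = (\<Sum>S\<in>F. (\<integral>\<^sup>+ \<omega>. alg_cost (A \<omega>) (inst K T S) + ennreal T * migrations (A \<omega>) (inst K T S) \<partial>M))"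
          by (rule nn_integral_sum) (use m1 m3 in simp)
        also have "\<dots> = (\<Sum>S\<in>F. expected_cost M A (inst K T S) + ennreal T * expected_migrations M A (inst K T S))"
        proof (rule sum.cong[OF refl])
          fix S
          show "(\<integral>\<^sup>+ \<omega>. alg_cost (A \<omega>) (inst K T S) + ennreal T * migrations (A \<omega>) (inst K T S) \<partial>M)
              = expected_cost M A (inst K T S) + ennreal T * expected_migrations M A (inst K T S)"
            unfolding expected_cost_def expected_migrations_def
            using m1[of S] m2[of S] m3[of S] by (simp add: nn_integral_add nn_integral_cmult)
        qed
        finally show ?thesis .
      qed
      also have "\<dots> \<le> (\<Sum>S\<in>F. ennreal b * ennreal (real K + T) + ennreal T * ennreal (\<alpha> * real (K*K)))"
      proof (rule sum_mono)
        fix S assume S: "S \<in> F"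
        have "expected_cost M A (inst K T S) \<le> ennreal b * OPT (inst K T S)" using le[of S] eb by simp
        also have "\<dots> \<le> ennreal b * ennreal (real K + T)"
          using opt_ub[OF K1 T FS(1)[OF S] eq_imp_le[OF FS(2)[OF S]]] by (intro mult_left_mono) auto
        finally have c1: "expected_cost M A (inst K T S) \<le> ennreal b * ennreal (real K + T)" .
        have c2: "expected_migrations M A (inst K T S) \<le> ennreal (\<alpha> * real (K*K))"
          using assms(4)[rule_format, OF inst_valid[OF K1 T, of S]] by simp
        show "expected_cost M A (inst K T S) + ennreal T * expected_migrations M A (inst K T S)
            \<le> ennreal b * ennreal (real K + T) + ennreal T * ennreal (\<alpha> * real (K*K))"
          using c1 c2 by (intro add_mono mult_left_mono) auto
      qed
      also have "\<dots> = ennreal (real (card F) * (b * (real K + T) + T * (\<alpha> * real (K*K))))"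
      proof -
        have n1: "0 \<le> b * (real K + T)" using b0 T by simp
        have n2: "0 \<le> T * (\<alpha> * real (K*K))" using T assms(1) by simp
        have e1: "ennreal b * ennreal (real K + T) = ennreal (b * (real K + T))"
          using b0 T by (intro ennreal_mult[symmetric]) auto
        have e2: "ennreal T * ennreal (\<alpha> * real (K*K)) = ennreal (T * (\<alpha> * real (K*K)))"
          using T assms(1) by (intro ennreal_mult[symmetric]) auto
        have e3: "ennreal (b * (real K + T)) + ennreal (T * (\<alpha> * real (K*K)))
            = ennreal (b * (real K + T) + T * (\<alpha> * real (K*K)))"
          using n1 n2 by (intro ennreal_plus[symmetric])
        have e4: "of_nat (card F) * ennreal (b * (real K + T) + T * (\<alpha> * real (K*K)))
            = ennreal (real (card F) * (b * (real K + T) + T * (\<alpha> * real (K*K))))"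
          unfolding ennreal_of_nat_eq_real_of_nat using n1 n2 by (intro ennreal_mult[symmetric]) auto
        show ?thesis unfolding sum_constant e1 e2 e3 e4 ..
      qed
      finally have "T * real (card F) * (real K + 1) / 2 \<le> real (card F) * (b * (real K + T) + T * (\<alpha> * real (K*K)))"
        using b0 T assms(1) by (subst (asm) ennreal_le_iff) auto
      hence "real (card F) * (T * ((real K + 1) / 2)) \<le> real (card F) * (b * (real K + T) + T * (\<alpha> * real (K*K)))"
        by (simp add: mult_ac)
      hence "T * ((real K + 1) / 2) \<le> b * (real K + T) + T * (\<alpha> * real (K*K))"
        using Fpos by (simp add: mult_le_cancel_left_pos)
      hence "T * D \<le> b * real K" unfolding D_def by (simp add: algebra_simps)
      thus False using TD by simp
    qed
  qed
qed

end
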